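(* Let $G$ be an infinite, connected, countable, locally finite $d$-regular graph equipped with a random labeling. Then with probability $1$ the following holds: for every $n\in\mathbb{N}$ there are infinitely many pairs $(v,\ell)$, with $v$ a vertex and $\ell\in\{1,\dots,d\}$ a port, such that the basic walk starting at $v$ with initial port $\ell$ visits (at least) $n$ distinct vertices.
   Context: Each undirected edge $\{v,w\}$ is regarded as two arcs $v\to w$ and $w\to v$. A labeling assigns, at each vertex $v$, the port numbers $1,\dots,d$ bijectively to the $d$ arcs leaving $v$ (labels on $v\to w$ and $w\to v$ need not agree). In a random labeling these bijections are chosen uniformly at random, independently for different vertices. Given a labeling, a starting vertex $v_0$ and an initial port $\ell$, the basic walk leaves $v_0$ along the arc labeled $\ell$; thereafter, whenever it enters a vertex $v$ along an arc whose label is $i$, it leaves $v$ along the arc out of $v$ labeled $(i \bmod d)+1$. *)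

theory Defs
  imports "HOL-Probability.Probability"
begin

text \<open>Graphs: the vertex set is the whole (countable) type 'a, edges are given by a
  symmetric irreflexive relation E.  The neighbourhood of v is the set of heads of the
  arcs leaving v.\<close>

definition nbrs :: "('a \<Rightarrow> 'a \<Rightarrow> bool) \<Rightarrow> 'a \<Rightarrow> 'a set" where
  "nbrs E v = {w. E v w}"

definition regular_graph :: "('a \<Rightarrow> 'a \<Rightarrow> bool) \<Rightarrow> nat \<Rightarrow> bool" where
  "regular_graph E d \<longleftrightarrow> (\<forall>v w. E v w \<longrightarrow> E w v) \<and> (\<forall>v. \<not> E v v)
     \<and> (\<forall>v. finite (nbrs E v) \<and> card (nbrs E v) = d)"

definition connected_graph :: "('a \<Rightarrow> 'a \<Rightarrow> bool) \<Rightarrow> bool" where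
  "connected_graph E \<longleftrightarrow> (\<forall>v w. E\<^sup>*\<^sup>* v w)"

text \<open>A local labeling at v: the port numbers 1..d assigned bijectively to the arcs
  leaving v; it is represented by the map port i \<mapsto> head of the arc labelled i.\<close>

definition local_labelings :: "('a \<Rightarrow> 'a \<Rightarrow> bool) \<Rightarrow> nat \<Rightarrow> 'a \<Rightarrow> (nat \<Rightarrow> 'a) set" where
  "local_labelings E d v = {f \<in> {1..d} \<rightarrow>\<^sub>E nbrs E v. bij_betw f {1..d} (nbrs E v)}"

definition random_labeling :: "('a \<Rightarrow> 'a \<Rightarrow> bool) \<Rightarrow> nat \<Rightarrow> ('a \<Rightarrow> nat \<Rightarrow> 'a) measure" where
  "random_labeling E d = (\<Pi>\<^sub>M v\<in>UNIV. uniform_count_measure (local_labelings E d v))"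

text \<open>State (v, i): the walk is at v and leaves v along the arc labelled i.
  After traversing the arc labelled i it enters the next vertex along an arc with label i
  and leaves it along the arc labelled (i mod d) + 1.\<close>

definition walk_step :: "('a \<Rightarrow> nat \<Rightarrow> 'a) \<Rightarrow> nat \<Rightarrow> 'a \<times> nat \<Rightarrow> 'a \<times> nat" where
  "walk_step L d s = (L (fst s) (snd s), (snd s mod d) + 1)"

definition walk_pos :: "('a \<Rightarrow> nat \<Rightarrow> 'a) \<Rightarrow> nat \<Rightarrow> 'a \<Rightarrow> nat \<Rightarrow> nat \<Rightarrow> 'a" where
  "walk_pos L d v l k = fst ((walk_step L d ^^ k) (v, l))"

definition visited :: "('a \<Rightarrow> nat \<Rightarrow> 'a) \<Rightarrow> nat \<Rightarrow> 'a \<Rightarrow> nat \<Rightarrow> 'a set" where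
  "visited L d v l = range (walk_pos L d v l)"

text \<open>The walk visits at least n distinct vertices (works also if it visits infinitely many).\<close>

definition visits_at_least :: "('a \<Rightarrow> nat \<Rightarrow> 'a) \<Rightarrow> nat \<Rightarrow> 'a \<Rightarrow> nat \<Rightarrow> nat \<Rightarrow> bool" where
  "visits_at_least L d v l n \<longleftrightarrow> (\<exists>S. S \<subseteq> visited L d v l \<and> finite S \<and> card S = n)"

end

theory Submission
  imports Defs
begin


lemma bc_infinite:
  fixes Mv :: "'a \<Rightarrow> 'b measure" and K :: "nat \<Rightarrow> 'a set" and Y :: "nat \<Rightarrow> 'a \<Rightarrow> 'b set"
  assumes ps: "\<And>v. prob_space (Mv v)"
    and fin: "\<And>j. finite (K j)" and disj: "disjoint_family K"
    and Ys: "\<And>j v. Y j v \<in> sets (Mv v)"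
    and q: "q > 0" "\<And>j. q \<le> (\<Prod>v\<in>K j. measure (Mv v) (Y j v))"
  shows "AE \<omega> in PiM UNIV Mv. infinite {j. \<forall>v\<in>K j. \<omega> v \<in> Y j v}"
proof -
  interpret product_prob_space Mv UNIV
    by (simp add: product_prob_spaceI ps)
  let ?P = "PiM UNIV Mv"
  define G where "G j = {\<omega> \<in> space ?P. \<forall>v\<in>K j. \<omega> v \<in> Y j v}" for j
  have Gemb: "G j = prod_emb UNIV Mv (K j) (PiE (K j) (Y j))" for j
    unfolding G_def prod_emb_def by (auto simp: PiE_iff space_PiM)
  have Gsets: "G j \<in> sets ?P" for j
    unfolding Gemb using fin Ys by (intro sets_PiM_I) auto
  have probG: "P.prob (G j) = (\<Prod>v\<in>K j. measure (Mv v) (Y j v))" for j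
    unfolding Gemb using fin Ys by (intro measure_PiM_emb) auto
  have ind0: "P.indep_vars Mv (\<lambda>i x. x i) UNIV"
  proof (subst P.indep_vars_iff_distr_eq_PiM)
    show "random_variable (Mv i) (\<lambda>x. x i)" for i
      by (simp add: measurable_component_singleton)
    have "distr ?P ?P (\<lambda>x. \<lambda>i\<in>UNIV. x i) = distr ?P ?P (\<lambda>x. x)" by (simp add: restrict_UNIV)
    also have "\<dots> = ?P" by (rule distr_id)
    also have "\<dots> = (\<Pi>\<^sub>M i\<in>UNIV. distr ?P (Mv i) (\<lambda>x. x i))"
      by (intro PiM_cong) (auto simp: PiM_component)
    finally show "distr ?P ?P (\<lambda>x. \<lambda>i\<in>UNIV. x i) = (\<Pi>\<^sub>M i\<in>UNIV. distr ?P (Mv i) (\<lambda>x. x i))" .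
  qed simp
  have ind: "P.indep_vars (\<lambda>j. PiM (K j) Mv) (\<lambda>j \<omega>. restrict (\<lambda>i. \<omega> i) (K j)) UNIV"
    using P.indep_vars_restrict[OF ind0, of UNIV K] disj by simp
  have prodint: "P.prob (\<Inter>j\<in>J. space ?P - G j) = (\<Prod>j\<in>J. 1 - P.prob (G j))"
    if J: "finite J" "J \<noteq> {}" for J
  proof -
    define A where "A j = space (PiM (K j) Mv) - PiE (K j) (Y j)" for j
    have pre: "(\<lambda>\<omega>. restrict (\<lambda>i. \<omega> i) (K j)) -` A j \<inter> space ?P = space ?P - G j" for j
      unfolding A_def G_def by (auto simp: space_PiM PiE_iff)
    have Asets: "A j \<in> sets (PiM (K j) Mv)" for j
      unfolding A_def using fin Ys by (intro sets.compl_sets sets_PiM_I_finite) auto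
    have "P.prob (\<Inter>j\<in>J. (\<lambda>\<omega>. restrict (\<lambda>i. \<omega> i) (K j)) -` A j \<inter> space ?P)
        = (\<Prod>j\<in>J. P.prob ((\<lambda>\<omega>. restrict (\<lambda>i. \<omega> i) (K j)) -` A j \<inter> space ?P))"
      using J Asets by (intro P.indep_varsD[OF ind]) auto
    then show ?thesis unfolding pre using Gsets by (simp add: P.prob_compl)
  qed
  have bad0: "P.prob (space ?P - (\<Union>j. G (j + N))) = 0" for N
  proof -
    let ?B = "space ?P - (\<Union>j. G (j + N))"
    have Bs: "?B \<in> sets ?P" using Gsets by auto
    have le: "P.prob ?B \<le> (1 - q) ^ Suc m" for m
    proof -
      have "?B \<subseteq> (\<Inter>j\<in>{N..N+m}. space ?P - G j)"
        by auto (metis le_add_diff_inverse2)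
      hence "P.prob ?B \<le> P.prob (\<Inter>j\<in>{N..N+m}. space ?P - G j)"
        using Gsets by (intro P.finite_measure_mono) auto
      also have "\<dots> = (\<Prod>j\<in>{N..N+m}. 1 - P.prob (G j))" by (rule prodint) auto
      also have "\<dots> \<le> (\<Prod>j\<in>{N..N+m}. 1 - q)"
        using q by (intro prod_mono) (auto simp: probG[symmetric])
      also have "\<dots> = (1 - q) ^ Suc m" by simp
      finally show ?thesis .
    qed
    show ?thesis
    proof (rule ccontr)
      assume "P.prob ?B \<noteq> 0"
      hence pos: "P.prob ?B > 0" using measure_nonneg[of ?P ?B] by linarith
      have q1: "q \<le> 1" using q(2)[of 0] probG[of 0] P.prob_le_1[of "G 0"] by linarith
      obtain m where "(1 - q) ^ m < P.prob ?B"
        using real_arch_pow_inv[OF pos, of "1 - q"] q by auto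
      moreover have "(1 - q) ^ Suc m \<le> (1 - q) ^ m"
        using q q1 by (intro power_decreasing) auto
      ultimately show False using le[of m] by linarith
    qed
  qed
  have "AE \<omega> in ?P. \<forall>N. \<omega> \<in> (\<Union>j. G (j + N))"
  proof (rule AE_all_countable[THEN iffD2], intro allI)
    fix N
    show "AE \<omega> in ?P. \<omega> \<in> (\<Union>j. G (j + N))"
      using bad0[of N] Gsets
      by (intro AE_I'[where N="space ?P - (\<Union>j. G (j + N))"])
         (auto simp: P.emeasure_eq_measure)
  qed
  then show ?thesis
  proof (rule eventually_mono)
    fix \<omega> assume "\<forall>N. \<omega> \<in> (\<Union>j. G (j + N))"
    hence "\<forall>N. \<exists>j\<ge>N. \<forall>v\<in>K j. \<omega> v \<in> Y j v"
      unfolding G_def by (metis (mono_tags, lifting) UN_E le_add2 mem_Collect_eq)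
    thus "infinite {j. \<forall>v\<in>K j. \<omega> v \<in> Y j v}"
      by (simp add: infinite_nat_iff_unbounded_le)
  qed
qed


definition gdist :: "('a \<Rightarrow> 'a \<Rightarrow> bool) \<Rightarrow> 'a \<Rightarrow> 'a \<Rightarrow> nat" where
  "gdist E r w = (LEAST k. (E ^^ k) r w)"

lemma gdist_reach: "connected_graph E \<Longrightarrow> (E ^^ gdist E r w) r w"
  unfolding gdist_def connected_graph_def
  by (metis (mono_tags) LeastI_ex rtranclp_power)

lemma gdist_le: "(E ^^ m) r w \<Longrightarrow> gdist E r w \<le> m"
  unfolding gdist_def by (rule Least_le)

lemma ball_finite:
  assumes "\<forall>v. finite (nbrs E v)"
  shows "finite {w. \<exists>m\<le>k. (E ^^ m) r w}"
proof (induction k)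
  case 0
  then show ?case by simp
next
  case (Suc k)
  let ?B = "{w. \<exists>m\<le>k. (E ^^ m) r w}"
  have "{w. \<exists>m\<le>Suc k. (E ^^ m) r w} \<subseteq> ?B \<union> (\<Union>u\<in>?B. nbrs E u)"
  proof
    fix w assume "w \<in> {w. \<exists>m\<le>Suc k. (E ^^ m) r w}"
    then obtain m where m: "m \<le> Suc k" "(E ^^ m) r w" by auto
    show "w \<in> ?B \<union> (\<Union>u\<in>?B. nbrs E u)"
    proof (cases m)
      case 0 then show ?thesis using m by auto
    next
      case (Suc m')
      with m obtain u where "(E ^^ m') r u" "E u w" by (auto elim: relpowp_Suc_E)
      then show ?thesis using m Suc by (auto simp: nbrs_def)
    qed
  qed
  moreover have "finite (?B \<union> (\<Union>u\<in>?B. nbrs E u))" using Suc assms by auto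
  ultimately show ?case by (rule finite_subset)
qed

lemma layer_nonempty:
  assumes fin: "\<forall>v. finite (nbrs E v)" and conn: "connected_graph E"
    and inf: "infinite (UNIV :: 'a set)"
  shows "\<exists>u::'a. gdist E r u = K"
proof -
  have "finite {w. \<exists>m\<le>K. (E ^^ m) r w}" by (rule ball_finite[OF fin])
  then obtain w where w: "w \<notin> {w. \<exists>m\<le>K. (E ^^ m) r w}"
    using ex_new_if_finite[OF inf] by blast
  let ?m = "gdist E r w"
  have reach: "(E ^^ ?m) r w" by (rule gdist_reach[OF conn])
  have "K < ?m"
  proof (rule ccontr)
    assume "\<not> K < ?m" hence "?m \<le> K" by simp
    with reach w show False by blast
  qed
  hence "(E ^^ (K + (?m - K))) r w" using reach by simp
  then obtain u where u: "(E ^^ K) r u" "(E ^^ (?m - K)) u w"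
    unfolding relpowp_add by auto
  have "gdist E r u = K"
  proof (rule ccontr)
    assume ne: "gdist E r u \<noteq> K"
    have lt: "gdist E r u < K" using gdist_le[OF u(1)] ne by simp
    have "(E ^^ (gdist E r u + (?m - K))) r w"
      unfolding relpowp_add using gdist_reach[OF conn, of r u] u(2) by auto
    hence "?m \<le> gdist E r u + (?m - K)" by (rule gdist_le)
    with lt \<open>K < ?m\<close> show False by simp
  qed
  then show ?thesis by blast
qed

lemma gdist_pred:
  assumes conn: "connected_graph E" and w: "gdist E r w = Suc k"
  shows "\<exists>u. gdist E r u = k \<and> E u w"
proof -
  have "(E ^^ Suc k) r w" using gdist_reach[OF conn, of r w] w by simp
  then obtain u where u: "(E ^^ k) r u" "E u w" by (auto elim: relpowp_Suc_E)
  have "gdist E r u = k"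
  proof (rule ccontr)
    assume "gdist E r u \<noteq> k"
    hence lt: "gdist E r u < k" using gdist_le[OF u(1)] by simp
    have "(E ^^ Suc (gdist E r u)) r w"
      using gdist_reach[OF conn, of r u] u(2) by (rule relpowp_Suc_I)
    hence "Suc k \<le> Suc (gdist E r u)" using gdist_le w by metis
    with lt show False by simp
  qed
  with u show ?thesis by blast
qed

lemma path_exists:
  assumes fin: "\<forall>v. finite (nbrs E v)" and conn: "connected_graph E"
    and inf: "infinite (UNIV :: 'a set)"
  shows "\<exists>p::nat \<Rightarrow> 'a. (\<forall>i\<le>n. gdist E r (p i) = a + i) \<and> (\<forall>i<n. E (p i) (p (Suc i)))"
proof (induction n arbitrary: a)
  case 0
  obtain u where "gdist E r u = a" using layer_nonempty[OF fin conn inf] by blast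
  then show ?case by (intro exI[of _ "\<lambda>_. u"]) auto
next
  case (Suc n)
  obtain p' where p': "\<forall>i\<le>n. gdist E r (p' i) = Suc a + i" "\<forall>i<n. E (p' i) (p' (Suc i))"
    using Suc[of "Suc a"] by blast
  obtain u where u: "gdist E r u = a" "E u (p' 0)"
    using gdist_pred[OF conn, of r "p' 0" a] p'(1) by auto
  define p where "p i = (if i = 0 then u else p' (i - 1))" for i
  have "\<forall>i\<le>Suc n. gdist E r (p i) = a + i"
    using p'(1) u by (auto simp: p_def)
  moreover have "\<forall>i<Suc n. E (p i) (p (Suc i))"
    using p'(2) u by (auto simp: p_def less_Suc_eq_0_disj)
  ultimately show ?case by blast
qed



lemma walk_iter:
  assumes d: "d > 0"
    and step: "\<And>i. i < n \<Longrightarrow> L (p i) (i mod d + 1) = p (Suc i)"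
  shows "i \<le> n \<Longrightarrow> (walk_step L d ^^ i) (p 0, 1) = (p i, i mod d + 1)"
proof (induction i)
  case 0 then show ?case by simp
next
  case (Suc i)
  then have "(walk_step L d ^^ Suc i) (p 0, 1) = walk_step L d (p i, i mod d + 1)" by simp
  also have "\<dots> = (p (Suc i), Suc i mod d + 1)"
    using step[of i] Suc.prems by (simp add: walk_step_def mod_Suc_eq)
  finally show ?case .
qed

lemma exists_labeling_value:
  assumes fin: "finite (nbrs E v)" and card: "card (nbrs E v) = d"
    and a: "a \<in> {1..d}" and w: "E v w"
  shows "\<exists>f\<in>local_labelings E d v. f a = w"
proof -
  have w': "w \<in> nbrs E v" using w by (simp add: nbrs_def)
  have "card ({1..d} - {a}) = card (nbrs E v - {w})"
    using a w' fin card by (simp add: card_Diff_singleton)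
  then obtain h where h: "bij_betw h ({1..d} - {a}) (nbrs E v - {w})"
    using finite_same_card_bij fin by (metis finite_Diff finite_atLeastAtMost)
  define f where "f = restrict (h(a := w)) {1..d}"
  have hb: "bij_betw (h(a := w)) ({1..d} - {a}) (nbrs E v - {w})"
    using h by (rule bij_betw_cong[THEN iffD1, rotated]) auto
  have "bij_betw (h(a := w)) (({1..d} - {a}) \<union> {a}) ((nbrs E v - {w}) \<union> {(h(a:=w)) a})"
    by (rule notIn_Un_bij_betw) (use hb in auto)
  moreover have "({1..d} - {a}) \<union> {a} = {1..d}" using a by auto
  moreover have "(nbrs E v - {w}) \<union> {(h(a:=w)) a} = nbrs E v" using w' by auto
  ultimately have b: "bij_betw (h(a := w)) {1..d} (nbrs E v)" by simp
  hence "bij_betw f {1..d} (nbrs E v)" unfolding f_def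
    by (rule bij_betw_cong[THEN iffD1, rotated]) auto
  moreover have "f \<in> {1..d} \<rightarrow>\<^sub>E nbrs E v"
    using bij_betw_imp_funcset[OF b] unfolding f_def by (auto simp: PiE_def Pi_def)
  moreover have "f a = w" using a by (simp add: f_def)
  ultimately show ?thesis unfolding local_labelings_def by blast
qed

theorem proposition4p5:
  fixes E :: "'a::countable \<Rightarrow> 'a \<Rightarrow> bool" and d :: nat
  assumes "infinite (UNIV :: 'a set)"
    and "connected_graph E"
    and "regular_graph E d"
  shows "AE L in random_labeling E d.
           \<forall>n::nat. infinite {(v, l). l \<in> {1..d} \<and> visits_at_least L d v l n}"
proof -
  note inf = assms(1) and conn = assms(2)
  have finN: "\<forall>v. finite (nbrs E v)" and cardN: "\<And>v. card (nbrs E v) = d"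
    using assms(3) unfolding regular_graph_def by auto
  have irr: "\<And>v. \<not> E v v" using assms(3) unfolding regular_graph_def by auto
  define LL where "LL = local_labelings E d"
  define Mv where "Mv v = uniform_count_measure (LL v)" for v
  have RL: "random_labeling E d = PiM UNIV Mv"
    unfolding random_labeling_def Mv_def LL_def ..
  have LLsub: "LL v \<subseteq> {1..d} \<rightarrow>\<^sub>E nbrs E v" for v
    unfolding LL_def local_labelings_def by auto
  have LLfin: "finite (LL v)" for v
    by (rule finite_subset[OF LLsub finite_PiE]) (use finN in auto)
  have LLcard: "card (LL v) \<le> d ^ d" for v
  proof -
    have "card (LL v) \<le> card ({1..d} \<rightarrow>\<^sub>E nbrs E v)"
      using LLsub finN by (intro card_mono finite_PiE) auto
    also have "\<dots> = d ^ d" by (simp add: card_PiE cardN)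
    finally show ?thesis .
  qed
  obtain r :: 'a where True by blast
  obtain w :: 'a where "w \<notin> {r}" using ex_new_if_finite[OF inf, of "{r}"] by blast
  hence "w \<noteq> r" by simp
  have "E\<^sup>*\<^sup>* r w" using conn unfolding connected_graph_def by blast
  then obtain y where "E r y" using \<open>w \<noteq> r\<close> by (cases rule: converse_rtranclpE) auto
  hence "nbrs E r \<noteq> {}" by (auto simp: nbrs_def)
  hence dpos: "d > 0" using cardN[of r] finN card_gt_0_iff[of "nbrs E r"] by simp
  have exf: "\<And>v a w. a \<in> {1..d} \<Longrightarrow> E v w \<Longrightarrow> \<exists>f\<in>LL v. f a = w"
    unfolding LL_def using finN cardN by (intro exists_labeling_value) auto
  have LLne: "LL v \<noteq> {}" for v
  proof -
    have "nbrs E v \<noteq> {}" using cardN[of v] dpos by auto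
    then obtain w where "E v w" by (auto simp: nbrs_def)
    then show ?thesis using exf[of 1 v w] dpos by auto
  qed
  have ps: "prob_space (Mv v)" for v
    unfolding Mv_def using LLfin LLne by (rule prob_space_uniform_count_measure)
  show ?thesis unfolding RL
  proof (rule AE_all_countable[THEN iffD2], intro allI)
    fix n :: nat
    have "\<forall>j. \<exists>p::nat \<Rightarrow> 'a. (\<forall>i\<le>n. gdist E r (p i) = j * Suc n + i) \<and> (\<forall>i<n. E (p i) (p (Suc i)))"
      using path_exists[OF finN conn inf] by blast
    from choice[OF this] obtain P where P0: "\<forall>j. (\<forall>i\<le>n. gdist E r (P j i) = j * Suc n + i) \<and> (\<forall>i<n. E (P j i) (P j (Suc i)))"
      by blast
    have P: "\<And>j i. i \<le> n \<Longrightarrow> gdist E r (P j i) = j * Suc n + i"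
      "\<And>j i. i < n \<Longrightarrow> E (P j i) (P j (Suc i))"
      using P0 by blast+
    have injP: "j = j' \<and> i = i'" if "P j i = P j' i'" "i \<le> n" "i' \<le> n" for j j' i i'
    proof -
      have eq: "j * Suc n + i = j' * Suc n + i'" using P(1)[OF that(2), of j] P(1)[OF that(3), of j'] that(1) by simp
      have dv: "(jj * Suc n + ii) div Suc n = jj" if "ii \<le> n" for jj ii
      proof -
        have "(ii + jj * Suc n) div Suc n = jj + ii div Suc n"
          by (rule div_mult_self1) simp
        moreover have "ii div Suc n = 0" using that by simp
        ultimately show ?thesis by (simp add: add.commute)
      qed
      have "j = j'" using dv[OF that(2), of j] dv[OF that(3), of j'] eq by simp
      with eq show ?thesis by simp
    qed
    define K where "K j = P j ` {..<n}" for j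
    define Y where "Y j v = {f\<in>LL v. \<forall>i<n. v = P j i \<longrightarrow> f (i mod d + 1) = P j (Suc i)}" for j v
    have disj: "disjoint_family K"
      unfolding disjoint_family_on_def
    proof (intro ballI impI)
      fix j1 j2 :: nat assume "j1 \<noteq> j2"
      show "K j1 \<inter> K j2 = {}"
      proof (rule ccontr)
        assume "K j1 \<inter> K j2 \<noteq> {}"
        then obtain i1 i2 where "i1 < n" "i2 < n" "P j1 i1 = P j2 i2" unfolding K_def by auto
        then show False using injP[of j1 i1 j2 i2] \<open>j1 \<noteq> j2\<close> less_imp_le by blast
      qed
    qed
    define c :: real where "c = 1 / real (d ^ d)"
    have c: "0 < c" "c \<le> 1" using dpos by (auto simp: c_def)
    have mY: "c \<le> measure (Mv v) (Y j v)" if v: "v \<in> K j" for v j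
    proof -
      obtain i0 where i0: "i0 < n" "v = P j i0" using v unfolding K_def by auto
      have "\<exists>f\<in>LL v. f (i0 mod d + 1) = P j (Suc i0)"
        using exf[of "i0 mod d + 1" v "P j (Suc i0)"] P(2)[OF i0(1)] i0 dpos
        by (auto simp: Suc_le_eq)
      then obtain f where f: "f \<in> LL v" "f (i0 mod d + 1) = P j (Suc i0)" by blast
      have "f \<in> Y j v" unfolding Y_def
      proof (intro CollectI conjI allI impI)
        show "f \<in> LL v" by (rule f(1))
        fix i assume ii: "i < n" "v = P j i"
        have eqv: "P j i = P j i0" using ii(2) i0(2) by simp
        have "i = i0" using injP[OF eqv less_imp_le[OF ii(1)] less_imp_le[OF i0(1)]] by blast
        then show "f (i mod d + 1) = P j (Suc i)" using f(2) by simp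
      qed
      hence "Y j v \<noteq> {}" by auto
      moreover have "finite (Y j v)" using LLfin[of v] unfolding Y_def by simp
      ultimately have "card (Y j v) \<ge> 1"
        by (simp add: Suc_le_eq card_gt_0_iff)
      moreover have "card (LL v) > 0" using LLfin LLne by (simp add: card_gt_0_iff)
      ultimately have "1 / real (card (LL v)) \<le> card (Y j v) / real (card (LL v))"
        by (intro divide_right_mono) auto
      moreover have "c \<le> 1 / real (card (LL v))"
        unfolding c_def using LLcard[of v] \<open>card (LL v) > 0\<close> dpos
        by (intro divide_left_mono) (auto simp del: of_nat_power)
      moreover have "measure (Mv v) (Y j v) = card (Y j v) / real (card (LL v))"
        unfolding Mv_def Y_def using LLfin by (intro measure_uniform_count_measure) auto
      ultimately show ?thesis by linarith
    qed
    have Ys: "Y j v \<in> sets (Mv v)" for j v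
      unfolding Mv_def Y_def by (auto simp: sets_uniform_count_measure)
    have qb: "c ^ n \<le> (\<Prod>v\<in>K j. measure (Mv v) (Y j v))" for j
    proof -
      have "c ^ n \<le> c ^ card (K j)"
        using c card_image_le[of "{..<n}" "P j"] unfolding K_def by (intro power_decreasing) auto
      also have "\<dots> = (\<Prod>v\<in>K j. c)" by simp
      also have "\<dots> \<le> (\<Prod>v\<in>K j. measure (Mv v) (Y j v))"
        using mY c by (intro prod_mono) auto
      finally show ?thesis .
    qed
    have AEJ: "AE \<omega> in PiM UNIV Mv. infinite {j. \<forall>v\<in>K j. \<omega> v \<in> Y j v}"
      using c by (intro bc_infinite[OF ps _ disj Ys _ qb]) (auto simp: K_def)
    show "AE L in PiM UNIV Mv. infinite {(v, l). l \<in> {1..d} \<and> visits_at_least L d v l n}"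
      using AEJ
    proof (rule eventually_mono)
      fix L assume inJ: "infinite {j. \<forall>v\<in>K j. L v \<in> Y j v}"
      let ?J = "{j. \<forall>v\<in>K j. L v \<in> Y j v}"
      let ?T = "{(v, l). l \<in> {1..d} \<and> visits_at_least L d v l n}"
      have sub: "(\<lambda>j. (P j 0, 1)) ` ?J \<subseteq> ?T"
      proof clarify
        fix j assume j: "\<forall>v\<in>K j. L v \<in> Y j v"
        have step: "L (P j i) (i mod d + 1) = P j (Suc i)" if "i < n" for i
        proof -
          have "P j i \<in> K j" using that by (auto simp: K_def)
          then show ?thesis using j that unfolding Y_def by auto
        qed
        have wk: "walk_pos L d (P j 0) 1 i = P j i" if "i \<le> n" for i
          unfolding walk_pos_def using walk_iter[of d n L "P j", OF dpos step that] by simp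
        have "K j \<subseteq> visited L d (P j 0) 1"
        proof
          fix x assume "x \<in> K j"
          then obtain i where i: "i < n" "x = P j i" unfolding K_def by blast
          hence "x = walk_pos L d (P j 0) 1 i" using wk[of i] by simp
          then show "x \<in> visited L d (P j 0) 1" unfolding visited_def by blast
        qed
        moreover have "inj_on (P j) {..<n}"
        proof (rule inj_onI)
          fix a b assume "a \<in> {..<n}" "b \<in> {..<n}" "P j a = P j b"
          then show "a = b" using injP[of j a j b] less_imp_le by blast
        qed
        hence "card (K j) = n" unfolding K_def by (simp add: card_image)
        ultimately have "visits_at_least L d (P j 0) 1 n"
          unfolding visits_at_least_def K_def by blast
        then show "1 \<in> {1..d} \<and> visits_at_least L d (P j 0) 1 n" using dpos by auto
      qed
      have "inj_on (\<lambda>j. (P j 0, 1::nat)) ?J"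
      proof (rule inj_onI)
        fix a b assume "(P a 0, 1::nat) = (P b 0, 1)"
        hence "P a 0 = P b 0" by simp
        then show "a = b" using injP[of a 0 b 0] by blast
      qed
      hence "infinite ((\<lambda>j. (P j 0, 1::nat)) ` ?J)" using inJ finite_imageD by blast
      then show "infinite ?T" using sub finite_subset by blast
    qed
  qed
qed

end
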